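(* There is a constant $0<C<\infty$ such that for all $0<r\le1$ and all $u,v\in\mathbb{C}$, \[\big|\eta_u(B(0,r))-\eta_v(B(0,r))\big|\le C|u-v|^{1/2},\] where $B(0,r)$ is the closed Korányi ball in $\mathbb{H}$ of radius $r$ centered at the identity $0$.
   Context: $\mathbb{H}=\mathbb{C}\times\mathbb{R}$ with group law $(u,s)\cdot(v,t)=(u+v,s+t+\mathrm{Im}(\bar u v))$ and Korányi metric $d(p,q)=\|q^{-1}\cdot p\|$, $\|(u,s)\|=(|u|^4+4s^2)^{1/4}$. For $u\in\mathbb{C}$, $\pi^{-1}(u)=\{u\}\times\mathbb{R}$ is the vertical line over $u$, and $\eta_u$ is the $2$-dimensional Hausdorff measure (with respect to the Korányi metric) restricted to $\pi^{-1}(u)$. *)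

theory Defs
  imports "HOL-Analysis.Analysis"
begin

type_synonym heis = "complex \<times> real"

definition heis_mult :: "heis \<Rightarrow> heis \<Rightarrow> heis" where
  "heis_mult p q = (fst p + fst q, snd p + snd q + Im (cnj (fst p) * fst q))"

definition heis_inv :: "heis \<Rightarrow> heis" where
  "heis_inv p = (- fst p, - snd p)"

definition kor_norm :: "heis \<Rightarrow> real" where
  "kor_norm p = ((cmod (fst p)) ^ 4 + 4 * (snd p)\<^sup>2) powr (1/4)"

definition kor_dist :: "heis \<Rightarrow> heis \<Rightarrow> real" where
  "kor_dist p q = kor_norm (heis_mult (heis_inv q) p)"

text \<open>Diameter w.r.t. the Koranyi metric (0 for the empty set).\<close>
definition kor_diam :: "heis set \<Rightarrow> ennreal" where
  "kor_diam E = (SUP p\<in>E. SUP q\<in>E. ennreal (kor_dist p q))"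

definition hausdorff_content :: "nat \<Rightarrow> real \<Rightarrow> heis set \<Rightarrow> ennreal" where
  "hausdorff_content s \<delta> A =
     (INF E\<in>{E :: nat \<Rightarrow> heis set. A \<subseteq> (\<Union>i. E i) \<and> (\<forall>i. kor_diam (E i) \<le> ennreal \<delta>)}.
        (\<Sum>i. kor_diam (E i) ^ s))"

definition hausdorff :: "nat \<Rightarrow> heis set \<Rightarrow> ennreal" where
  "hausdorff s A = (SUP \<delta>\<in>{0<..}. hausdorff_content s \<delta> A)"

definition vline :: "complex \<Rightarrow> heis set" where
  "vline u = {u} \<times> UNIV"

definition eta :: "complex \<Rightarrow> heis set \<Rightarrow> ennreal" where
  "eta u A = hausdorff 2 (A \<inter> vline u)"

definition kor_cball :: "heis \<Rightarrow> real \<Rightarrow> heis set" where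
  "kor_cball p r = {q. kor_dist q p \<le> r}"

end

theory Submission imports Defs begin
lemma kd_line: "kor_dist (u,s) (u,t) = sqrt (2 * \<bar>s - t\<bar>)"
proof -
  have "heis_mult (heis_inv (u,t)) (u,s) = (0, s - t)"
    by (simp add: heis_mult_def heis_inv_def)
  moreover have "(4 * x\<^sup>2) powr (1/4) = sqrt (2 * \<bar>x\<bar>)" for x :: real
  proof -
    have e: "4 * x\<^sup>2 = (2*\<bar>x\<bar>) powr 2" by (simp add: power2_eq_square powr_numeral)
    have "(4 * x\<^sup>2) powr (1/4) = ((2*\<bar>x\<bar>) powr 2) powr (1/4)" by (subst e) (rule refl)
    also have "\<dots> = (2*\<bar>x\<bar>) powr (1/2)" by (simp only: powr_powr) simp
    finally show ?thesis by (simp add: powr_half_sqrt)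
  qed
  ultimately show ?thesis by (simp add: kor_dist_def kor_norm_def)
qed

lemma kd_zero: "kor_dist (u,t) (0,0) = ((cmod u)^4 + 4*t\<^sup>2) powr (1/4)"
  by (simp add: kor_dist_def kor_norm_def heis_mult_def heis_inv_def)

lemma diam_seg_le:
  assumes "0 \<le> l"
  shows "kor_diam ({u} \<times> {a..a+l}) \<le> ennreal (sqrt (2*l))"
  unfolding kor_diam_def
proof (intro SUP_least)
  fix p q assume p: "p \<in> {u} \<times> {a..a+l}" and q: "q \<in> {u} \<times> {a..a+l}"
  then obtain s t where "p = (u,s)" "q = (u,t)" "s \<in> {a..a+l}" "t \<in> {a..a+l}" by auto
  then show "ennreal (kor_dist p q) \<le> ennreal (sqrt (2*l))"
    by (auto simp: kd_line intro!: ennreal_leI)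
qed

lemma diam_pts_ge:
  assumes "(u,s) \<in> E" "(u,t) \<in> E"
  shows "ennreal (sqrt (2 * \<bar>s - t\<bar>)) \<le> kor_diam E"
  unfolding kor_diam_def
  using assms by (metis SUP_upper2 kd_line order_refl)

lemma cover_induct:
  assumes "0 \<le> l"
  shows "{a..a + real n * l} \<subseteq> (\<Union>i\<in>{..<max 1 n}. {a + real i * l .. a + real (Suc i) * l})"
proof (induction n)
  case 0 then show ?case using assms by force
next
  case (Suc n)
  show ?case
  proof
    fix t assume t: "t \<in> {a..a + real (Suc n) * l}"
    show "t \<in> (\<Union>i\<in>{..<max 1 (Suc n)}. {a + real i * l .. a + real (Suc i) * l})"
    proof (cases "t \<le> a + real n * l")
      case True
      then have "t \<in> (\<Union>i\<in>{..<max 1 n}. {a + real i * l .. a + real (Suc i) * l})"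
        using t True by (intro subsetD[OF Suc.IH]) simp
      moreover have "{..<max 1 n} \<subseteq> {..<max 1 (Suc n)}" by (simp add: max_def)
      ultimately show ?thesis by (meson UN_mono order_refl subsetD)
    next
      case False
      then have "t \<in> {a + real n * l .. a + real (Suc n) * l}" using t by simp
      moreover have "n \<in> {..<max 1 (Suc n)}" by simp
      ultimately show ?thesis by (rule UN_I[rotated])
    qed
  qed
qed

lemma content_upper:
  assumes h: "0 \<le> h" and d: "0 < \<delta>"
  shows "hausdorff_content 2 \<delta> ({u} \<times> {-h..h}) \<le> ennreal (4*h)"
proof -
  obtain n :: nat where n: "4*h/\<delta>\<^sup>2 < real n" using reals_Archimedean2 by blast
  have "0 \<le> 4*h/\<delta>\<^sup>2" using h d by simp
  then have npos: "0 < n" using n by linarith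
  define l where "l = 2*h / real n"
  have l0: "0 \<le> l" using h by (simp add: l_def)
  have nl: "real n * l = 2*h" using npos by (simp add: l_def)
  have "4*h < real n * \<delta>\<^sup>2" using n d by (simp add: field_simps)
  then have "2*l \<le> \<delta>\<^sup>2" using npos by (simp add: l_def field_simps)
  then have sl: "sqrt (2*l) \<le> \<delta>" using d by (simp add: real_sqrt_le_iff real_le_lsqrt)
  define E where "E i = (if i < n then {u} \<times> {-h + real i * l .. -h + real i * l + l} else {})" for i
  have dE: "kor_diam (E i) \<le> (if i < n then ennreal (sqrt (2*l)) else 0)" for i
    unfolding E_def using diam_seg_le[OF l0] by (auto simp: kor_diam_def bot_ennreal)
  have cov: "{u} \<times> {-h..h} \<subseteq> (\<Union>i. E i)"
  proof
    fix p assume "p \<in> {u} \<times> {-h..h}"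
    then obtain t where p: "p = (u,t)" and t: "t \<in> {-h .. -h + real n * l}" using nl by auto
    from subsetD[OF cover_induct[OF l0] t] obtain i where i: "i < max 1 n"
      and ti: "t \<in> {-h + real i * l .. -h + real (Suc i) * l}" by blast
    have "i < n" using i npos by simp
    then have "p \<in> E i" using ti p by (simp add: E_def algebra_simps)
    then show "p \<in> (\<Union>i. E i)" by blast
  qed
  moreover have "\<forall>i. kor_diam (E i) \<le> ennreal \<delta>"
  proof
    fix i
    have "(if i < n then ennreal (sqrt (2*l)) else 0) \<le> ennreal \<delta>" using sl by (simp add: ennreal_leI)
    then show "kor_diam (E i) \<le> ennreal \<delta>" using dE[of i] by (rule order_trans[rotated])
  qed
  ultimately have "hausdorff_content 2 \<delta> ({u} \<times> {-h..h}) \<le> (\<Sum>i. kor_diam (E i) ^ 2)"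
    unfolding hausdorff_content_def by (intro INF_lower) auto
  also have "\<dots> \<le> (\<Sum>i. (if i < n then ennreal (2*l) else 0))"
  proof (intro suminf_le summableI)
    fix i
    have "kor_diam (E i) ^ 2 \<le> (if i < n then ennreal (sqrt (2*l)) else 0) ^ 2"
      using dE[of i] by (intro power_mono) auto
    also have "\<dots> = (if i < n then ennreal (2*l) else 0)"
      using l0 by (simp add: ennreal_power)
    finally show "kor_diam (E i) ^ 2 \<le> (if i < n then ennreal (2*l) else 0)" .
  qed
  also have "\<dots> = (\<Sum>i<n. ennreal (2*l))"
    by (subst suminf_finite[of "{..<n}"]) auto
  also have "\<dots> = ennreal (4*h)"
  proof -
    have "(\<Sum>i<n. ennreal (2*l)) = ennreal (real n * (2*l))"
      using l0 by (simp add: ennreal_of_nat_eq_real_of_nat ennreal_mult)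
    moreover have "real n * (2*l) = 4*h" using nl by (simp add: mult.commute)
    ultimately show ?thesis by simp
  qed
  finally show ?thesis .
qed

lemma ennreal_term_le_suminf: "(f i :: ennreal) \<le> (\<Sum>j. f j)"
proof -
  have "f i \<le> (\<Sum>j<Suc i. f j)" by (intro member_le_sum) auto
  also have "\<dots> \<le> (\<Sum>j. f j)" by (intro sum_le_suminf summableI) auto
  finally show ?thesis .
qed

lemma real_set_interval:
  fixes F :: "real set"
  assumes "F \<noteq> {}" "\<And>s t. s \<in> F \<Longrightarrow> t \<in> F \<Longrightarrow> s - t \<le> c"
  shows "F \<subseteq> {Inf F..Sup F} \<and> Sup F - Inf F \<le> c"
proof -
  obtain t0 where t0: "t0 \<in> F" using assms(1) by blast
  have ba: "bdd_above F" using assms(2)[OF _ t0] by (intro bdd_aboveI[of _ "c + t0"]) (auto simp: algebra_simps)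
  have bb: "bdd_below F" using assms(2)[OF t0] by (intro bdd_belowI[of _ "t0 - c"]) (auto simp: algebra_simps)
  have "F \<subseteq> {Inf F..Sup F}" using ba bb by (auto intro: cInf_lower cSup_upper)
  moreover have "Sup F - c \<le> Inf F"
  proof (rule cInf_greatest[OF assms(1)])
    fix t assume t: "t \<in> F"
    have "Sup F \<le> c + t" using assms(2)[OF _ t] by (intro cSup_least[OF assms(1)]) (auto simp: algebra_simps)
    then show "Sup F - c \<le> t" by simp
  qed
  ultimately show ?thesis by simp
qed

lemma content_lower:
  assumes h: "0 \<le> h" and cov: "{u} \<times> {-h..h} \<subseteq> (\<Union>i. E i)"
  shows "ennreal (4*h) \<le> (\<Sum>i. kor_diam (E i) ^ 2)"
proof (cases "\<exists>i. kor_diam (E i) = top")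
  case True
  then obtain i where "kor_diam (E i) = top" by blast
  then have "kor_diam (E i) ^ 2 = top" by (simp add: top_power_ennreal)
  then have "(\<Sum>i. kor_diam (E i) ^ 2) = top"
    using ennreal_term_le_suminf[of "\<lambda>i. kor_diam (E i) ^ 2" i] by (simp add: top_unique)
  then show ?thesis by simp
next
  case False
  define D where "D i = enn2real (kor_diam (E i))" for i
  have D0: "0 \<le> D i" for i by (simp add: D_def)
  have kD: "kor_diam (E i) = ennreal (D i)" for i using False by (simp add: D_def less_top)
  define F where "F i = {t. (u,t) \<in> E i}" for i
  have Fd: "s - t \<le> (D i)\<^sup>2 / 2" if "s \<in> F i" "t \<in> F i" for i s t
  proof -
    have "ennreal (sqrt (2 * \<bar>s - t\<bar>)) \<le> ennreal (D i)"
      using diam_pts_ge[of u s "E i" t] that kD by (simp add: F_def)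
    then have "sqrt (2 * \<bar>s - t\<bar>) \<le> D i" using D0 by (simp add: ennreal_le_iff)
    then have "(sqrt (2 * \<bar>s - t\<bar>))\<^sup>2 \<le> (D i)\<^sup>2" by (intro power_mono) auto
    then show ?thesis by (simp add: abs_if split: if_splits)
  qed
  define I where "I i = (if F i = {} then {} else {Inf (F i)..Sup (F i)})" for i
  have FI: "F i \<subseteq> I i" for i using real_set_interval[of "F i" "(D i)\<^sup>2 / 2"] Fd[of _ i] by (auto simp: I_def)
  have mI: "emeasure lborel (I i) \<le> ennreal ((D i)\<^sup>2 / 2)" for i
  proof (cases "F i = {}")
    case True then show ?thesis by (simp add: I_def)
  next
    case False
    then have "Sup (F i) - Inf (F i) \<le> (D i)\<^sup>2 / 2" "F i \<subseteq> {Inf (F i)..Sup (F i)}"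
      using real_set_interval[of "F i" "(D i)\<^sup>2 / 2"] Fd[of _ i] False by auto
    moreover have "Inf (F i) \<le> Sup (F i)" using False calculation(2) by auto
    ultimately show ?thesis using False by (simp add: I_def ennreal_leI)
  qed
  have "{-h..h} \<subseteq> (\<Union>i. F i)" using cov by (auto simp: F_def)
  then have sub: "{-h..h} \<subseteq> (\<Union>i. I i)" using FI by blast
  have Ib: "I i \<in> sets lborel" for i by (simp add: I_def)
  then have UI: "(\<Union>i. I i) \<in> sets lborel" by (intro sets.countable_UN) auto
  have "ennreal (2*h) = emeasure lborel {-h..h}" using h by simp
  also have "\<dots> \<le> emeasure lborel (\<Union>i. I i)" using sub UI by (intro emeasure_mono)
  also have "\<dots> \<le> (\<Sum>i. emeasure lborel (I i))"
    using Ib by (intro emeasure_subadditive_countably) auto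
  also have "\<dots> \<le> (\<Sum>i. ennreal ((D i)\<^sup>2 / 2))" by (intro suminf_le summableI mI)
  finally have le: "ennreal (2*h) \<le> (\<Sum>i. ennreal ((D i)\<^sup>2 / 2))" .
  have "ennreal (4*h) = 2 * ennreal (2*h)" using h by (simp add: ennreal_mult)
  also have "\<dots> \<le> 2 * (\<Sum>i. ennreal ((D i)\<^sup>2 / 2))" using le by (intro mult_left_mono) auto
  also have "\<dots> = (\<Sum>i. 2 * ennreal ((D i)\<^sup>2 / 2))" by simp
  also have "\<dots> = (\<Sum>i. kor_diam (E i) ^ 2)"
  proof (intro suminf_cong)
    fix i
    show "2 * ennreal ((D i)\<^sup>2 / 2) = kor_diam (E i) ^ 2"
    proof -
      have "2 * ennreal ((D i)\<^sup>2 / 2) = ennreal 2 * ennreal ((D i)\<^sup>2 / 2)" by simp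
      also have "\<dots> = ennreal (2 * ((D i)\<^sup>2 / 2))" by (rule ennreal_mult[symmetric]) auto
      also have "\<dots> = kor_diam (E i) ^ 2" using D0[of i] by (simp add: kD ennreal_power)
      finally show ?thesis .
    qed
  qed
  finally show ?thesis .
qed

lemma hausdorff_seg:
  assumes h: "0 \<le> h"
  shows "hausdorff 2 ({u} \<times> {-h..h}) = ennreal (4*h)"
proof -
  have "hausdorff_content 2 \<delta> ({u} \<times> {-h..h}) = ennreal (4*h)" if d: "0 < \<delta>" for \<delta>
  proof (rule antisym)
    show "hausdorff_content 2 \<delta> ({u} \<times> {-h..h}) \<le> ennreal (4*h)" by (rule content_upper[OF h d])
    show "ennreal (4*h) \<le> hausdorff_content 2 \<delta> ({u} \<times> {-h..h})"
      unfolding hausdorff_content_def using content_lower[OF h] by (intro INF_greatest) auto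
  qed
  then have "(SUP \<delta>\<in>{0<..}. hausdorff_content 2 \<delta> ({u} \<times> {-h..h})) = (SUP \<delta>\<in>{0::real<..}. ennreal (4*h))"
    by (intro SUP_cong) auto
  also have "\<dots> = ennreal (4*h)" by (intro SUP_const) (simp add: gt_ex)
  finally show ?thesis unfolding hausdorff_def .
qed

lemma hausdorff_empty: "hausdorff 2 {} = 0"
proof -
  have "hausdorff_content 2 \<delta> {} = 0" for \<delta>
  proof -
    have "hausdorff_content 2 \<delta> {} \<le> (\<Sum>i. kor_diam ((\<lambda>i. {}) i) ^ 2)"
      unfolding hausdorff_content_def by (intro INF_lower) (auto simp: kor_diam_def bot_ennreal)
    also have "\<dots> = 0" by (simp add: kor_diam_def bot_ennreal)
    finally show ?thesis by simp
  qed
  then show ?thesis unfolding hausdorff_def by simp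
qed

lemma powr4_le_iff:
  fixes x r :: real assumes "0 \<le> x" "0 < r"
  shows "x powr (1/4) \<le> r \<longleftrightarrow> x \<le> r^4"
proof -
  have "x powr (1/4) \<le> r \<longleftrightarrow> (x powr (1/4))^4 \<le> r^4"
    using assms by (intro power_mono_iff[symmetric]) auto
  also have "(x powr (1/4))^4 = x"
    using assms by (cases "x = 0") (simp_all add: powr_power)
  finally show ?thesis .
qed

lemma sq_le_iff_abs: "0 \<le> R \<Longrightarrow> (4 * t\<^sup>2 \<le> R) \<longleftrightarrow> \<bar>t\<bar> \<le> sqrt R / 2"
proof -
  assume R: "0 \<le> R"
  have e: "sqrt ((2*t)\<^sup>2) = 2 * \<bar>t\<bar>" by (simp only: real_sqrt_abs abs_mult)
  have "\<bar>t\<bar> \<le> sqrt R / 2 \<longleftrightarrow> sqrt ((2*t)\<^sup>2) \<le> sqrt R" unfolding e by linarith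
  also have "\<dots> \<longleftrightarrow> (2*t)\<^sup>2 \<le> R" by simp
  finally show ?thesis by (simp add: power_mult_distrib mult.commute)
qed

lemma eta_ball:
  assumes r: "0 < r"
  shows "eta u (kor_cball (0,0) r) = ennreal (2 * sqrt (max 0 (r^4 - cmod u ^ 4)))"
proof -
  have S: "kor_cball (0,0) r \<inter> vline u = {u} \<times> {t. 4 * t\<^sup>2 \<le> r^4 - cmod u ^ 4}"
  proof -
    have "(u,t) \<in> kor_cball (0,0) r \<longleftrightarrow> 4 * t\<^sup>2 \<le> r^4 - cmod u ^ 4" for t
    proof -
      have "(u,t) \<in> kor_cball (0,0) r \<longleftrightarrow> ((cmod u)^4 + 4*t\<^sup>2) powr (1/4) \<le> r"
        by (simp add: kor_cball_def kd_zero)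
      also have "\<dots> \<longleftrightarrow> (cmod u)^4 + 4*t\<^sup>2 \<le> r^4" using r by (intro powr4_le_iff) auto
      finally show ?thesis by linarith
    qed
    then show ?thesis by (auto simp: vline_def)
  qed
  show ?thesis
  proof (cases "cmod u \<le> r")
    case True
    define R where "R = r^4 - cmod u ^ 4"
    have R0: "0 \<le> R" unfolding R_def using True by (simp add: power_mono)
    have seq: "{t. 4 * t\<^sup>2 \<le> r^4 - cmod u ^ 4} = {-(sqrt R/2)..sqrt R/2}"
    proof (intro set_eqI)
      fix t
      have a: "4 * t\<^sup>2 \<le> r^4 - cmod u ^ 4 \<longleftrightarrow> \<bar>t\<bar> \<le> sqrt R / 2"
        using sq_le_iff_abs[OF R0, of t] unfolding R_def .
      have b: "t \<in> {-(sqrt R/2)..sqrt R/2} \<longleftrightarrow> \<bar>t\<bar> \<le> sqrt R / 2" by (cases "0 \<le> t") auto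
      show "t \<in> {t. 4 * t\<^sup>2 \<le> r^4 - cmod u ^ 4} \<longleftrightarrow> t \<in> {-(sqrt R/2)..sqrt R/2}"
        using a b by simp
    qed
    have "eta u (kor_cball (0,0) r) = ennreal (4 * (sqrt R / 2))"
      unfolding eta_def S seq by (rule hausdorff_seg) (use R0 in simp)
    moreover have "max 0 (r^4 - cmod u ^ 4) = R" using R0 by (simp add: R_def)
    ultimately show ?thesis by simp
  next
    case False
    then have "r^4 < cmod u ^ 4" using r by (simp add: power_strict_mono)
    then have "{t. 4 * t\<^sup>2 \<le> r^4 - cmod u ^ 4} = {}"
    proof -
      have "\<not> 4 * t\<^sup>2 \<le> r^4 - cmod u ^ 4" for t
        using \<open>r^4 < cmod u ^ 4\<close> zero_le_power2[of t] by linarith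
      then show ?thesis by blast
    qed
    moreover have "max 0 (r^4 - cmod u ^ 4) = 0" using \<open>r^4 < cmod u ^ 4\<close> by simp
    ultimately show ?thesis unfolding eta_def S by (simp add: hausdorff_empty)
  qed
qed

lemma sqrt_diff_le: "0 \<le> X \<Longrightarrow> 0 \<le> Y \<Longrightarrow> \<bar>sqrt X - sqrt Y\<bar> \<le> sqrt \<bar>X - Y\<bar>"
proof -
  have k: "sqrt X - sqrt Y \<le> sqrt \<bar>X - Y\<bar>" if "0 \<le> Y" "Y \<le> X" for X Y :: real
  proof -
    have "sqrt X = sqrt (Y + (X - Y))" by simp
    also have "\<dots> \<le> sqrt Y + sqrt (X - Y)" using that by (intro sqrt_add_le_add_sqrt) auto
    finally show ?thesis using that by simp
  qed
  assume "0 \<le> X" "0 \<le> Y"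
  show ?thesis
  proof (cases "Y \<le> X")
    case True
    then have "sqrt Y \<le> sqrt X" by simp
    then have "\<bar>sqrt X - sqrt Y\<bar> = sqrt X - sqrt Y" by simp
    then show ?thesis using k[OF \<open>0 \<le> Y\<close> True] by simp
  next
    case False
    then have "sqrt X \<le> sqrt Y" by simp
    then have "\<bar>sqrt X - sqrt Y\<bar> = sqrt Y - sqrt X" by simp
    moreover have "\<bar>X - Y\<bar> = \<bar>Y - X\<bar>" by (rule abs_minus_commute)
    ultimately show ?thesis using k[OF \<open>0 \<le> X\<close>] False by simp
  qed
qed

lemma fourth_diff: 
  fixes x y :: real assumes "0 \<le> x" "x \<le> 1" "0 \<le> y" "y \<le> 1"
  shows "\<bar>x^4 - y^4\<bar> \<le> 4 * \<bar>x - y\<bar>"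
proof -
  have e: "x^4 - y^4 = (x - y) * ((x + y) * (x\<^sup>2 + y\<^sup>2))" by algebra
  have "(x + y) * (x\<^sup>2 + y\<^sup>2) \<le> 2 * 2"
  proof -
    have "x\<^sup>2 \<le> 1" "y\<^sup>2 \<le> 1" using assms by (auto intro: power_le_one)
    then show ?thesis using assms by (intro mult_mono) auto
  qed
  moreover have "0 \<le> (x + y) * (x\<^sup>2 + y\<^sup>2)" using assms by simp
  ultimately have "\<bar>x - y\<bar> * \<bar>(x + y) * (x\<^sup>2 + y\<^sup>2)\<bar> \<le> \<bar>x - y\<bar> * 4"
    by (intro mult_left_mono) auto
  then show ?thesis unfolding e abs_mult by (simp add: mult.commute)
qed

lemma key_ineq:
  fixes a b r :: real assumes "0 \<le> a" "0 \<le> b" "0 < r" "r \<le> 1"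
  shows "\<bar>2 * sqrt (max 0 (r^4 - a^4)) - 2 * sqrt (max 0 (r^4 - b^4))\<bar> \<le> 4 * sqrt \<bar>a - b\<bar>"
proof -
  define x where "x = min a r"
  define y where "y = min b r"
  have mx: "max 0 (r^4 - a^4) = r^4 - x^4"
    unfolding x_def using assms by (cases "a \<le> r") (auto simp: power_mono)
  have my: "max 0 (r^4 - b^4) = r^4 - y^4"
    unfolding y_def using assms by (cases "b \<le> r") (auto simp: power_mono)
  have x: "0 \<le> x" "x \<le> 1" and y: "0 \<le> y" "y \<le> 1" using assms by (auto simp: x_def y_def)
  have xy: "\<bar>x - y\<bar> \<le> \<bar>a - b\<bar>" unfolding x_def y_def by (auto simp: min_def)
  have "\<bar>2 * sqrt (r^4 - x^4) - 2 * sqrt (r^4 - y^4)\<bar> = 2 * \<bar>sqrt (r^4 - x^4) - sqrt (r^4 - y^4)\<bar>"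
  proof -
    have eq: "2 * sqrt (r^4 - x^4) - 2 * sqrt (r^4 - y^4) = 2 * (sqrt (r^4 - x^4) - sqrt (r^4 - y^4))" by algebra
    show ?thesis unfolding eq abs_mult by simp
  qed
  also have "\<dots> \<le> 2 * sqrt \<bar>(r^4 - x^4) - (r^4 - y^4)\<bar>"
    using sqrt_diff_le[of "r^4 - x^4" "r^4 - y^4"] mx my by (simp add: max_def split: if_splits)
  also have "\<bar>(r^4 - x^4) - (r^4 - y^4)\<bar> = \<bar>x^4 - y^4\<bar>" by (simp add: abs_minus_commute)
  also have "2 * sqrt \<bar>x^4 - y^4\<bar> \<le> 2 * sqrt (4 * \<bar>a - b\<bar>)"
    using fourth_diff[OF x y] xy by simp
  also have "\<dots> = 4 * sqrt \<bar>a - b\<bar>" by (simp add: real_sqrt_mult)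
  finally show ?thesis unfolding mx my .
qed

theorem lemma4p5:
  shows "\<exists>C::real. 0 < C \<and>
    (\<forall>r u v. 0 < r \<and> r \<le> 1 \<longrightarrow>
       eta u (kor_cball (0,0) r) < \<infinity> \<and> eta v (kor_cball (0,0) r) < \<infinity> \<and>
       \<bar>enn2real (eta u (kor_cball (0,0) r)) - enn2real (eta v (kor_cball (0,0) r))\<bar>
         \<le> C * cmod (u - v) powr (1/2))"
proof (intro exI[of _ 4] conjI allI impI)
  fix r :: real and u v :: complex
  assume rr: "0 < r \<and> r \<le> 1"
  then have r: "0 < r" "r \<le> 1" by auto
  show "eta u (kor_cball (0,0) r) < \<infinity>" "eta v (kor_cball (0,0) r) < \<infinity>"
    unfolding eta_ball[OF r(1), of u] eta_ball[OF r(1), of v] by simp_all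
  have "\<bar>enn2real (eta u (kor_cball (0,0) r)) - enn2real (eta v (kor_cball (0,0) r))\<bar>
      = \<bar>2 * sqrt (max 0 (r^4 - cmod u ^ 4)) - 2 * sqrt (max 0 (r^4 - cmod v ^ 4))\<bar>"
    unfolding eta_ball[OF r(1), of u] eta_ball[OF r(1), of v] by simp
  also have "\<dots> \<le> 4 * sqrt \<bar>cmod u - cmod v\<bar>" by (rule key_ineq) (use r in auto)
  also have "\<dots> \<le> 4 * sqrt (cmod (u - v))" by (simp add: norm_triangle_ineq3)
  also have "\<dots> = 4 * cmod (u - v) powr (1/2)" by (simp add: powr_half_sqrt)
  finally show "\<bar>enn2real (eta u (kor_cball (0,0) r)) - enn2real (eta v (kor_cball (0,0) r))\<bar>
         \<le> 4 * cmod (u - v) powr (1/2)" .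
qed simp
end
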